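(* Let $\mathcal{A}$ be a central and essential arrangement in $\mathbb{Q}^l$ as in the context, let $1\le i_1<\dots<i_l\le n$, let $\sigma$ be a term ordering, and let $p$ be a prime that is good for $\mathcal{A}$ and $\sigma$-lucky for the ideal $I_{\mathbb{Z}}=\langle\alpha_{i_1},\dots,\alpha_{i_l}\rangle\subseteq\mathbb{Z}[x_1,\dots,x_l]$. Then $(i_1,\dots,i_l)\in\mathfrak{I}(\mathcal{A})$ if and only if $(i_1,\dots,i_l)\in\mathfrak{I}(\mathcal{A}_p)$.
   Context: $\mathcal{A}=\{H_1,\dots,H_n\}$ is an arrangement of $n$ distinct, linearly ordered linear hyperplanes in $\mathbb{Q}^l$ with $\bigcap_iH_i=\{0\}$. $H_i=\{\alpha_i=0\}$ with $\alpha_i\in\mathbb{Z}[x_1,\dots,x_l]$ a nonzero linear form whose coefficients are not all divisible by any prime; $Q(\mathcal{A})=\prod\alpha_i$. $\pi_p$ denotes reduction mod $p$, $(\alpha_i)_p=\pi_p(\alpha_i)$; $p$ is good if $\pi_p(Q(\mathcal{A}))$ is reduced (no $(\alpha_i)_p$ is a scalar multiple of $(\alpha_j)_p$, $i<j$), and then $\mathcal{A}_p=\{(H_1)_p,\dots,(H_n)_p\}$ in $\mathbb{F}_p^l$, $(H_i)_p=\{(\alpha_i)_p=0\}$. For an arrangement $\{G_1,\dots,G_n\}$ in $K^l$, $\mathfrak{I}=\{(i_1,\dots,i_l): i_1<\dots<i_l,\ \dim(G_{i_1}\cap\dots\cap G_{i_l})=0\}$. Gröbner notions: for a term ordering $\sigma$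 and nonzero $f\in\mathbb{Z}[x_1,\dots,x_l]$, $\mathrm{LT}_\sigma(f)$ is the $\sigma$-largest term in the support of $f$, $\mathrm{LC}_\sigma(f)$ its coefficient, $\mathrm{LM}_\sigma(f)=\mathrm{LC}_\sigma(f)\mathrm{LT}_\sigma(f)$. A finite set $G$ of nonzero elements of an ideal $I\subseteq\mathbb{Z}[x_1,\dots,x_l]$ is a minimal strong $\sigma$-Gröbner basis of $I$ if $G$ generates $I$, for every nonzero $f\in I$ some $\mathrm{LM}_\sigma(g)$, $g\in G$, divides $\mathrm{LM}_\sigma(f)$, and no $\mathrm{LM}_\sigma(g)$ divides $\mathrm{LM}_\sigma(g')$ for distinct $g,g'\in G$. Such bases exist for nonzero $I$ and the set of their leading coefficients does not depend on the choice. A prime $p$ is $\sigma$-lucky for $I$ if $p$ divides no leading coefficient of an element of a minimal strong $\sigma$-Gröbner basis of $I$. *)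

theory Defs
  imports Complex_Main "HOL-Library.Poly_Mapping" "HOL-Computational_Algebra.Primes"
begin

text \<open>The ring Z[x_1,...,x_l] is represented (0-indexed) by the polynomials
  whose monomials only involve the variables 0,...,l-1.\<close>

type_synonym mono = "nat \<Rightarrow>\<^sub>0 nat"
type_synonym zpoly = "mono \<Rightarrow>\<^sub>0 int"

definition mon_set :: "nat \<Rightarrow> mono set" where
  "mon_set l = {m. \<forall>v\<in>Poly_Mapping.keys m. v < l}"

definition zpolys :: "nat \<Rightarrow> zpoly set" where
  "zpolys l = {f. \<forall>m\<in>Poly_Mapping.keys f. m \<in> mon_set l}"

definition var :: "nat \<Rightarrow> zpoly" where
  "var k = Poly_Mapping.single (Poly_Mapping.single k 1) 1"

definition lin_form :: "nat \<Rightarrow> (nat \<Rightarrow> nat \<Rightarrow> int) \<Rightarrow> nat \<Rightarrow> zpoly" where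
  "lin_form l a i = (\<Sum>k<l. Poly_Mapping.single 0 (a i k) * var k)"

definition ideal_gen :: "nat \<Rightarrow> zpoly set \<Rightarrow> zpoly set" where
  "ideal_gen l G = {f. \<exists>c. (\<forall>g\<in>G. c g \<in> zpolys l) \<and> f = (\<Sum>g\<in>G. c g * g)}"

definition term_order :: "nat \<Rightarrow> (mono \<Rightarrow> mono \<Rightarrow> bool) \<Rightarrow> bool" where
  "term_order l ord \<longleftrightarrow>
     (\<forall>m\<in>mon_set l. ord m m) \<and>
     (\<forall>m\<in>mon_set l. \<forall>m'\<in>mon_set l. ord m m' \<and> ord m' m \<longrightarrow> m = m') \<and>
     (\<forall>m\<in>mon_set l. \<forall>m'\<in>mon_set l. \<forall>m''\<in>mon_set l. ord m m' \<and> ord m' m'' \<longrightarrow> ord m m'') \<and>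
     (\<forall>m\<in>mon_set l. \<forall>m'\<in>mon_set l. ord m m' \<or> ord m' m) \<and>
     (\<forall>m\<in>mon_set l. ord 0 m) \<and>
     (\<forall>m\<in>mon_set l. \<forall>m'\<in>mon_set l. \<forall>k\<in>mon_set l. ord m m' \<longrightarrow> ord (m + k) (m' + k))"

definition LT :: "(mono \<Rightarrow> mono \<Rightarrow> bool) \<Rightarrow> zpoly \<Rightarrow> mono" where
  "LT ord f = (THE m. m \<in> Poly_Mapping.keys f \<and> (\<forall>m'\<in>Poly_Mapping.keys f. ord m' m))"

definition LC :: "(mono \<Rightarrow> mono \<Rightarrow> bool) \<Rightarrow> zpoly \<Rightarrow> int" where
  "LC ord f = Poly_Mapping.lookup f (LT ord f)"

definition LM :: "(mono \<Rightarrow> mono \<Rightarrow> bool) \<Rightarrow> zpoly \<Rightarrow> zpoly" where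
  "LM ord f = Poly_Mapping.single (LT ord f) (LC ord f)"

definition pdvd :: "nat \<Rightarrow> zpoly \<Rightarrow> zpoly \<Rightarrow> bool" where
  "pdvd l g f \<longleftrightarrow> (\<exists>q\<in>zpolys l. f = q * g)"

definition min_strong_GB :: "nat \<Rightarrow> (mono \<Rightarrow> mono \<Rightarrow> bool) \<Rightarrow> zpoly set \<Rightarrow> zpoly set \<Rightarrow> bool" where
  "min_strong_GB l ord I G \<longleftrightarrow>
     finite G \<and> 0 \<notin> G \<and> G \<subseteq> I \<and> ideal_gen l G = I \<and>
     (\<forall>f\<in>I. f \<noteq> 0 \<longrightarrow> (\<exists>g\<in>G. pdvd l (LM ord g) (LM ord f))) \<and>
     (\<forall>g\<in>G. \<forall>g'\<in>G. g \<noteq> g' \<longrightarrow> \<not> pdvd l (LM ord g) (LM ord g'))"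

definition lucky :: "nat \<Rightarrow> (mono \<Rightarrow> mono \<Rightarrow> bool) \<Rightarrow> zpoly set \<Rightarrow> int \<Rightarrow> bool" where
  "lucky l ord I p \<longleftrightarrow> (\<exists>G. min_strong_GB l ord I G \<and> (\<forall>g\<in>G. \<not> p dvd LC ord g))"

text \<open>Arrangements. The hyperplane H_i = {alpha_i = 0} in Q^l (vectors x :: nat => rat,
  zero outside {0..<l}) and its reduction (H_i)_p in F_p^l (F_p = {0..p-1} with arithmetic mod p).\<close>
definition hyp :: "nat \<Rightarrow> (nat \<Rightarrow> nat \<Rightarrow> int) \<Rightarrow> nat \<Rightarrow> (nat \<Rightarrow> rat) set" where
  "hyp l a i = {x. (\<forall>k\<ge>l. x k = 0) \<and> (\<Sum>k<l. of_int (a i k) * x k) = 0}"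

definition hyp_p :: "nat \<Rightarrow> int \<Rightarrow> (nat \<Rightarrow> nat \<Rightarrow> int) \<Rightarrow> nat \<Rightarrow> (nat \<Rightarrow> int) set" where
  "hyp_p l p a i = {x. (\<forall>k<l. 0 \<le> x k \<and> x k < p) \<and> (\<forall>k\<ge>l. x k = 0) \<and>
                        (\<Sum>k<l. a i k * x k) mod p = 0}"

definition arrangement :: "nat \<Rightarrow> nat \<Rightarrow> (nat \<Rightarrow> nat \<Rightarrow> int) \<Rightarrow> bool" where
  "arrangement l n a \<longleftrightarrow>
     (\<forall>i<n. \<forall>q::int. prime q \<longrightarrow> \<not> (\<forall>k<l. q dvd a i k)) \<and>
     (\<forall>i<n. \<forall>j<n. i \<noteq> j \<longrightarrow> hyp l a i \<noteq> hyp l a j) \<and>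
     (\<Inter>i\<in>{..<n}. hyp l a i) = {(\<lambda>_. 0)}"

definition good_prime :: "nat \<Rightarrow> nat \<Rightarrow> (nat \<Rightarrow> nat \<Rightarrow> int) \<Rightarrow> int \<Rightarrow> bool" where
  "good_prime l n a p \<longleftrightarrow> prime p \<and>
     (\<forall>i<n. \<forall>j<n. i \<noteq> j \<longrightarrow> \<not> (\<exists>c::int. \<forall>k<l. a i k mod p = (c * a j k) mod p))"

text \<open>Membership of an increasing l-tuple s(0)<...<s(l-1) of indices in the set I(A),
  resp. I(A_p): the intersection of the chosen hyperplanes has dimension 0, i.e. is {0}.\<close>
definition in_frakI :: "nat \<Rightarrow> (nat \<Rightarrow> nat \<Rightarrow> int) \<Rightarrow> (nat \<Rightarrow> nat) \<Rightarrow> bool" where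
  "in_frakI l a s \<longleftrightarrow> (\<Inter>t\<in>{..<l}. hyp l a (s t)) = {(\<lambda>_. 0)}"

definition in_frakI_p :: "nat \<Rightarrow> int \<Rightarrow> (nat \<Rightarrow> nat \<Rightarrow> int) \<Rightarrow> (nat \<Rightarrow> nat) \<Rightarrow> bool" where
  "in_frakI_p l p a s \<longleftrightarrow> (\<Inter>t\<in>{..<l}. hyp_p l p a (s t)) = {(\<lambda>_. 0)}"

end

theory Submission imports Defs "Jordan_Normal_Form.Determinant" begin

lemma single0_of_int: "Poly_Mapping.single 0 z = (of_int z :: zpoly)"
  by (metis single_of_int of_int_eq_id id_apply)

lemma lin_form_alt: "lin_form l a i = (\<Sum>k<l. of_int (a i k) * var k)"
  unfolding lin_form_def single0_of_int ..

lemma lookup_mult_single_right: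
  "Poly_Mapping.lookup (c * Poly_Mapping.single m b) m' = Sum_any (\<lambda>q. Poly_Mapping.lookup c q * b when m' = q + m)"
proof -
  have "\<And>l. Sum_any (\<lambda>q. Poly_Mapping.lookup (Poly_Mapping.single m b) q when m' = l + q) = (b when m' = l + m)"
  proof -
    fix l
    have "(\<lambda>q. Poly_Mapping.lookup (Poly_Mapping.single m b) q when m' = l + q) = (\<lambda>q. (b when m' = l + q) when m = q)"
      by (auto simp: when_def fun_eq_iff lookup_single)
    then show "Sum_any (\<lambda>q. Poly_Mapping.lookup (Poly_Mapping.single m b) q when m' = l + q) = (b when m' = l + m)"
      by (simp only: Sum_any_when_equal')
  qed
  then show ?thesis by (simp add: lookup_mult mult_when)
qed

lemma add_eq_single1:
  fixes x m :: mono
  assumes "x + m = Poly_Mapping.single k 1"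
  shows "m = 0 \<or> m = Poly_Mapping.single k 1"
proof -
  have h: "Poly_Mapping.lookup x i + Poly_Mapping.lookup m i = (if i = k then 1 else 0)" for i
    using arg_cong[OF assms, of "\<lambda>f. Poly_Mapping.lookup f i"] by (simp add: lookup_add lookup_single when_def)
  show ?thesis
  proof (cases "Poly_Mapping.lookup m k = 0")
    case True
    have "Poly_Mapping.lookup m i = 0" for i
    proof (cases "i = k")
      case False then show ?thesis using h[of i] by simp
    qed (use True in simp)
    then have "m = 0" by (intro poly_mapping_eqI) simp
    then show ?thesis by simp
  next
    case False
    have "Poly_Mapping.lookup m i = Poly_Mapping.lookup (Poly_Mapping.single k 1) i" for i
    proof (cases "i = k")
      case False then show ?thesis using h[of i] by (simp add: lookup_single)
    next
      case True then show ?thesis using h[of k] \<open>Poly_Mapping.lookup m k \<noteq> 0\<close> by simp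
    qed
    then have "m = Poly_Mapping.single k 1" by (intro poly_mapping_eqI) simp
    then show ?thesis by simp
  qed
qed

lemma single1_eq_iff: "(Poly_Mapping.single k (1::nat) = Poly_Mapping.single j 1) \<longleftrightarrow> k = j"
  by (metis lookup_single_not_eq lookup_single_eq zero_neq_one)

lemma single1_neq0: "Poly_Mapping.single k (1::nat) \<noteq> 0"
  by (metis lookup_single_eq lookup_zero one_neq_zero)

lemma lookup_c_var_0: "Poly_Mapping.lookup (c * var k) 0 = 0"
proof -
  have "q + Poly_Mapping.single k 1 \<noteq> 0" for q :: mono
  proof
    assume "q + Poly_Mapping.single k 1 = 0"
    moreover have "Poly_Mapping.lookup (q + Poly_Mapping.single k 1) k \<noteq> 0" by (simp add: lookup_add)
    ultimately show False by simp
  qed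
  then show ?thesis unfolding var_def lookup_mult_single_right
    by (simp add: when_def)
qed

lemma lookup_c_var_1: "Poly_Mapping.lookup (c * var k) (Poly_Mapping.single j 1) = (if j = k then Poly_Mapping.lookup c 0 else 0)"
proof -
  have "(Poly_Mapping.single j 1 = q + Poly_Mapping.single k 1) \<longleftrightarrow> (j = k \<and> q = 0)" for q :: mono
  proof
    assume a: "Poly_Mapping.single j 1 = q + Poly_Mapping.single k 1"
    then have "Poly_Mapping.single k 1 = (0::mono) \<or> Poly_Mapping.single k 1 = (Poly_Mapping.single j 1::mono)"
      using add_eq_single1[OF a[symmetric]] by blast
    then have jk: "j = k" using single1_eq_iff single1_neq0 by metis
    then show "j = k \<and> q = 0" using a by simp
  qed auto
  then show ?thesis unfolding var_def lookup_mult_single_right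
    by (simp add: when_def)
qed

lemma mon_set_add: "m \<in> mon_set l \<Longrightarrow> m' \<in> mon_set l \<Longrightarrow> m + m' \<in> mon_set l"
  unfolding mon_set_def using keys_add[of m m'] by blast

lemma zpolys_add: "f \<in> zpolys l \<Longrightarrow> g \<in> zpolys l \<Longrightarrow> f + g \<in> zpolys l"
  unfolding zpolys_def using keys_add[of f g] by blast

lemma zpolys_mult: "f \<in> zpolys l \<Longrightarrow> g \<in> zpolys l \<Longrightarrow> f * g \<in> zpolys l"
  unfolding zpolys_def using keys_mult[of f g] mon_set_add by blast

lemma zpolys_zero: "0 \<in> zpolys l"
  unfolding zpolys_def by simp

lemma zpolys_sum: "(\<And>x. x \<in> A \<Longrightarrow> f x \<in> zpolys l) \<Longrightarrow> sum f A \<in> zpolys l"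
  by (induction A rule: infinite_finite_induct) (auto intro: zpolys_add zpolys_zero)

lemma zpolys_of_int: "(of_int z :: zpoly) \<in> zpolys l"
  unfolding zpolys_def mon_set_def single0_of_int[symmetric] by simp

lemma zpolys_var: "k < l \<Longrightarrow> var k \<in> zpolys l"
  unfolding zpolys_def mon_set_def var_def by simp

lemma zpolys_lin_form: "lin_form l a i \<in> zpolys l"
  unfolding lin_form_alt by (intro zpolys_sum zpolys_mult zpolys_of_int zpolys_var) auto

lemma ideal_gen_subset: "Gen \<subseteq> zpolys l \<Longrightarrow> ideal_gen l Gen \<subseteq> zpolys l"
  unfolding ideal_gen_def by (auto intro!: zpolys_sum zpolys_mult)

lemma to_refl: "term_order l ord \<Longrightarrow> m \<in> mon_set l \<Longrightarrow> ord m m"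
  unfolding term_order_def by (elim conjE) (drule bspec, assumption)

lemma to_antisym: "term_order l ord \<Longrightarrow> m \<in> mon_set l \<Longrightarrow> m' \<in> mon_set l \<Longrightarrow> ord m m' \<Longrightarrow> ord m' m \<Longrightarrow> m = m'"
proof -
  assume a: "term_order l ord" "m \<in> mon_set l" "m' \<in> mon_set l" "ord m m'" "ord m' m"
  have "\<forall>m\<in>mon_set l. \<forall>m'\<in>mon_set l. ord m m' \<and> ord m' m \<longrightarrow> m = m'"
    using a(1) unfolding term_order_def by (elim conjE)
  then show "m = m'" using a(2-5) by simp
qed

lemma to_trans: "term_order l ord \<Longrightarrow> m \<in> mon_set l \<Longrightarrow> m' \<in> mon_set l \<Longrightarrow> m'' \<in> mon_set l \<Longrightarrow> ord m m' \<Longrightarrow> ord m' m'' \<Longrightarrow> ord m m''"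
proof -
  assume a: "term_order l ord" "m \<in> mon_set l" "m' \<in> mon_set l" "m'' \<in> mon_set l" "ord m m'" "ord m' m''"
  have "\<forall>m\<in>mon_set l. \<forall>m'\<in>mon_set l. \<forall>m''\<in>mon_set l. ord m m' \<and> ord m' m'' \<longrightarrow> ord m m''"
    using a(1) unfolding term_order_def by (elim conjE)
  then show "ord m m''" using a(2-6) by blast
qed

lemma to_total: "term_order l ord \<Longrightarrow> m \<in> mon_set l \<Longrightarrow> m' \<in> mon_set l \<Longrightarrow> ord m m' \<or> ord m' m"
proof -
  assume a: "term_order l ord" "m \<in> mon_set l" "m' \<in> mon_set l"
  have "\<forall>m\<in>mon_set l. \<forall>m'\<in>mon_set l. ord m m' \<or> ord m' m"
    using a(1) unfolding term_order_def by (elim conjE)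
  then show ?thesis using a(2-3) by blast
qed

lemma ex_max:
  assumes "term_order l ord" "finite K" "K \<noteq> {}" "K \<subseteq> mon_set l"
  shows "\<exists>m\<in>K. \<forall>m'\<in>K. ord m' m"
  using assms(2,3,4)
proof (induction K rule: finite_ne_induct)
  case (singleton x)
  then show ?case using to_refl[OF assms(1)] by auto
next
  case (insert x F)
  then obtain m where m: "m \<in> F" "\<forall>m'\<in>F. ord m' m" by auto
  have xm: "x \<in> mon_set l" "m \<in> mon_set l" using insert m by auto
  show ?case
  proof (cases "ord m x")
    case True
    have "ord m' x" if "m' \<in> F" for m'
    proof -
      have "m' \<in> mon_set l" using that insert.prems by auto
      then show ?thesis using to_trans[OF assms(1) _ xm(2) xm(1)] m(2) that True by blast
    qed
    moreover have "ord x x" using to_refl[OF assms(1) xm(1)] .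
    ultimately show ?thesis by auto
  next
    case False
    then have "ord x m" using to_total[OF assms(1) xm] by blast
    then show ?thesis using m by auto
  qed
qed

lemma LT_props:
  assumes "term_order l ord" "f \<in> zpolys l" "f \<noteq> 0"
  shows "LT ord f \<in> Poly_Mapping.keys f" "\<forall>m\<in>Poly_Mapping.keys f. ord m (LT ord f)"
proof -
  have K: "finite (Poly_Mapping.keys f)" "Poly_Mapping.keys f \<noteq> {}" "Poly_Mapping.keys f \<subseteq> mon_set l"
    using assms unfolding zpolys_def by auto
  obtain m where m: "m \<in> Poly_Mapping.keys f" "\<forall>m'\<in>Poly_Mapping.keys f. ord m' m"
    using ex_max[OF assms(1) K] by blast
  have u: "\<exists>!m. m \<in> Poly_Mapping.keys f \<and> (\<forall>m'\<in>Poly_Mapping.keys f. ord m' m)"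
  proof (rule ex1I[of _ m])
    fix m2 assume m2: "m2 \<in> Poly_Mapping.keys f \<and> (\<forall>m'\<in>Poly_Mapping.keys f. ord m' m2)"
    then have "ord m2 m" "ord m m2" using m by auto
    then show "m2 = m" using to_antisym[OF assms(1)] m(1) m2 K(3) by blast
  qed (use m in auto)
  show "LT ord f \<in> Poly_Mapping.keys f" "\<forall>m\<in>Poly_Mapping.keys f. ord m (LT ord f)"
    using theI'[OF u] unfolding LT_def by auto
qed

lemma lookup_mult_const0: "Poly_Mapping.lookup ((c::zpoly) * of_int z) 0 = Poly_Mapping.lookup c 0 * z"
proof -
  have "(\<lambda>q. Poly_Mapping.lookup c q * z when (0::mono) = q + 0) = (\<lambda>q::mono. Poly_Mapping.lookup c q * z when 0 = q)"
    by simp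
  then show ?thesis unfolding single0_of_int[symmetric] lookup_mult_single_right
    by (simp only: Sum_any_when_equal')
qed

lemma c_lin_form_expand: "c * lin_form l a i = (\<Sum>k<l. (c * of_int (a i k)) * var k)"
  unfolding lin_form_alt by (simp add: sum_distrib_left mult.assoc)

lemma lookup_c_lin_0: "Poly_Mapping.lookup (c * lin_form l a i) 0 = 0"
  unfolding c_lin_form_expand lookup_sum lookup_c_var_0 by simp

lemma lookup_c_lin_1: "j < l \<Longrightarrow> Poly_Mapping.lookup (c * lin_form l a i) (Poly_Mapping.single j 1) = Poly_Mapping.lookup c 0 * a i j"
  unfolding c_lin_form_expand lookup_sum lookup_c_var_1 lookup_mult_const0 by simp


definition Mat :: "nat \<Rightarrow> (nat \<Rightarrow> nat \<Rightarrow> int) \<Rightarrow> (nat \<Rightarrow> nat) \<Rightarrow> int mat" where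
  "Mat l a s = mat l l (\<lambda>(t,j). a (s t) j)"

lemma Mat_carrier: "Mat l a s \<in> carrier_mat l l"
  unfolding Mat_def by simp

lemma Mat_mult_vec: "v \<in> carrier_vec l \<Longrightarrow> t < l \<Longrightarrow> (Mat l a s *\<^sub>v v) $ t = (\<Sum>k<l. a (s t) k * v $ k)"
  unfolding Mat_def by (simp add: scalar_prod_def atLeast0LessThan row_def)

lemma Matq_mult_vec: "v \<in> carrier_vec l \<Longrightarrow> t < l \<Longrightarrow>
   (map_mat rat_of_int (Mat l a s) *\<^sub>v v) $ t = (\<Sum>k<l. of_int (a (s t) k) * v $ k)"
  unfolding Mat_def by (simp add: scalar_prod_def atLeast0LessThan row_def)

lemma zero_in_hyp: "(\<lambda>_. 0) \<in> hyp l a i"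
  unfolding hyp_def by simp

lemma frakI_iff_det:
  assumes "0 < l"
  shows "in_frakI l a s \<longleftrightarrow> det (Mat l a s) \<noteq> 0"
proof
  assume I: "in_frakI l a s"
  show "det (Mat l a s) \<noteq> 0"
  proof
    assume "det (Mat l a s) = 0"
    then obtain v where v: "v \<in> carrier_vec l" "v \<noteq> 0\<^sub>v l" "Mat l a s *\<^sub>v v = 0\<^sub>v l"
      using det_0_iff_vec_prod_zero[OF Mat_carrier] by blast
    define x :: "nat \<Rightarrow> rat" where "x k = (if k < l then rat_of_int (v $ k) else 0)" for k
    have "x \<in> hyp l a (s t)" if "t < l" for t
    proof -
      have "(\<Sum>k<l. of_int (a (s t) k) * x k) = of_int (\<Sum>k<l. a (s t) k * v $ k)"
        unfolding x_def by simp
      also have "\<dots> = 0" using Mat_mult_vec[OF v(1) that, of a s] v(3) that by simp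
      finally show ?thesis unfolding hyp_def x_def by simp
    qed
    then have "x \<in> (\<Inter>t\<in>{..<l}. hyp l a (s t))" by auto
    then have "x = (\<lambda>_. 0)" using I unfolding in_frakI_def by auto
    then have vi: "v $ i = 0" if "i < l" for i
      using fun_cong[OF \<open>x = (\<lambda>_. 0)\<close>, of i] that unfolding x_def by simp
    then have "v = 0\<^sub>v l" using v(1) by (intro eq_vecI) auto
    then show False using v(2) by simp
  qed
next
  assume D: "det (Mat l a s) \<noteq> 0"
  show "in_frakI l a s"
    unfolding in_frakI_def
  proof (intro equalityI subsetI)
    fix x :: "nat \<Rightarrow> rat" assume x: "x \<in> (\<Inter>t\<in>{..<l}. hyp l a (s t))"
    show "x \<in> {\<lambda>_. 0}"
    proof (rule ccontr)
      assume nz: "x \<notin> {\<lambda>_. 0}"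
      define w where "w = vec l x"
      have w: "w \<in> carrier_vec l" unfolding w_def by simp
      have xl: "\<forall>k\<ge>l. x k = 0" using x assms unfolding hyp_def by auto
      have "w \<noteq> 0\<^sub>v l"
      proof
        assume "w = 0\<^sub>v l"
        then have xk: "x k = 0" if "k < l" for k
        proof -
          have "w $ k = 0\<^sub>v l $ k" using \<open>w = 0\<^sub>v l\<close> by simp
          then show ?thesis using that unfolding w_def by simp
        qed
        have "x = (\<lambda>_. 0)"
        proof (rule ext)
          fix k show "x k = 0" using xk xl by (cases "k < l") auto
        qed
        then show False using nz by auto
      qed
      moreover have "map_mat rat_of_int (Mat l a s) *\<^sub>v w = 0\<^sub>v l"
      proof (intro eq_vecI)
        fix t assume t: "t < dim_vec (0\<^sub>v l :: rat vec)"
        then have "x \<in> hyp l a (s t)" using x by auto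
        then show "(map_mat rat_of_int (Mat l a s) *\<^sub>v w) $ t = 0\<^sub>v l $ t"
          using Matq_mult_vec[OF w, of t a s] t unfolding w_def hyp_def by simp
      qed (simp add: Mat_def)
      ultimately have "det (map_mat rat_of_int (Mat l a s)) = 0"
        using det_0_iff_vec_prod_zero[of "map_mat rat_of_int (Mat l a s)" l] w Mat_carrier by auto
      then show False using D by simp
    qed
  next
    fix x :: "nat \<Rightarrow> rat" assume "x \<in> {\<lambda>_. 0}"
    then show "x \<in> (\<Inter>t\<in>{..<l}. hyp l a (s t))" using zero_in_hyp by auto
  qed
qed

lemma mod_sum_mult: "(\<Sum>k\<in>A. f k * (g k mod (p::int))) mod p = (\<Sum>k\<in>A. f k * g k) mod p"
proof -
  have "(\<Sum>k\<in>A. f k * (g k mod p)) mod p = (\<Sum>k\<in>A. f k * (g k mod p) mod p) mod p"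
    by (simp add: mod_sum_eq)
  also have "\<dots> = (\<Sum>k\<in>A. f k * g k mod p) mod p"
    by (simp add: mod_mult_right_eq)
  also have "\<dots> = (\<Sum>k\<in>A. f k * g k) mod p"
    by (simp add: mod_sum_eq)
  finally show ?thesis .
qed

lemma frakI_p_det:
  assumes p: "prime p" and I: "in_frakI_p l p a s"
  shows "det (Mat l a s) \<noteq> 0"
proof
  assume "det (Mat l a s) = 0"
  then have ex: "\<exists>v. v \<in> carrier_vec l \<and> v \<noteq> 0\<^sub>v l \<and> Mat l a s *\<^sub>v v = 0\<^sub>v l"
    using det_0_iff_vec_prod_zero[OF Mat_carrier] by blast
  define P where "P v \<longleftrightarrow> v \<in> carrier_vec l \<and> v \<noteq> 0\<^sub>v l \<and> Mat l a s *\<^sub>v v = 0\<^sub>v l" for v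
  define \<mu> where "\<mu> v = nat (\<Sum>k<l. \<bar>v $ k\<bar>)" for v :: "int vec"
  obtain w where w: "P w" "\<And>u. P u \<Longrightarrow> \<mu> w \<le> \<mu> u"
    using ex ex_has_least_nat[of P _ \<mu>] unfolding P_def by metis
  have p1: "p > 1" using p prime_gt_1_int by blast
  have wc: "w \<in> carrier_vec l" "w \<noteq> 0\<^sub>v l" "Mat l a s *\<^sub>v w = 0\<^sub>v l" using w(1) unfolding P_def by auto
  have "\<exists>k<l. \<not> p dvd w $ k"
  proof (rule ccontr)
    assume "\<not> (\<exists>k<l. \<not> p dvd w $ k)"
    then have dv: "\<And>k. k < l \<Longrightarrow> w $ k = p * (w $ k div p)" by auto
    define w' where "w' = vec l (\<lambda>k. w $ k div p)"
    have w'c: "w' \<in> carrier_vec l" unfolding w'_def by simp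
    have "Mat l a s *\<^sub>v w' = 0\<^sub>v l"
    proof (intro eq_vecI)
      fix t assume t: "t < dim_vec (0\<^sub>v l :: int vec)"
      then have t': "t < l" by simp
      have "0 = (Mat l a s *\<^sub>v w) $ t" using wc(3) t' by simp
      also have "\<dots> = (\<Sum>k<l. a (s t) k * w $ k)" using Mat_mult_vec[OF wc(1) t'] .
      also have "\<dots> = (\<Sum>k<l. p * (a (s t) k * w' $ k))"
        by (intro sum.cong refl) (metis dv w'_def index_vec lessThan_iff mult.left_commute)
      also have "\<dots> = p * (Mat l a s *\<^sub>v w') $ t"
        using Mat_mult_vec[OF w'c t'] by (simp add: sum_distrib_left)
      finally show "(Mat l a s *\<^sub>v w') $ t = 0\<^sub>v l $ t" using p1 t' by simp
    qed (simp add: Mat_def w'_def)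
    moreover have "w' \<noteq> 0\<^sub>v l"
    proof
      assume "w' = 0\<^sub>v l"
      then have "w $ k = 0" if "k < l" for k
      proof -
        have "w' $ k = 0\<^sub>v l $ k" using \<open>w' = 0\<^sub>v l\<close> by simp
        then have "w $ k div p = 0" using that unfolding w'_def by simp
        then show ?thesis using dv[OF that] by simp
      qed
      then have "w = 0\<^sub>v l" using wc(1) by (intro eq_vecI) auto
      then show False using wc(2) by simp
    qed
    ultimately have Pw': "P w'" using w'c unfolding P_def by simp
    have "(\<Sum>k<l. \<bar>w $ k\<bar>) = p * (\<Sum>k<l. \<bar>w' $ k\<bar>)"
      unfolding sum_distrib_left
    proof (intro sum.cong refl)
      fix k assume "k \<in> {..<l}"
      then have "w $ k = p * w' $ k" using dv unfolding w'_def by simp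
      then show "\<bar>w $ k\<bar> = p * \<bar>w' $ k\<bar>" using p1 by (simp add: abs_mult)
    qed
    moreover have "(\<Sum>k<l. \<bar>w' $ k\<bar>) > 0"
    proof -
      obtain k where "k < l" "w' $ k \<noteq> 0"
      proof (rule ccontr)
        assume "\<not> thesis"
        then have "\<forall>k<l. w' $ k = 0" using that by blast
        then have "w' = 0\<^sub>v l" using w'c by (intro eq_vecI) auto
        then show False using \<open>w' \<noteq> 0\<^sub>v l\<close> by simp
      qed
      then have "0 < \<bar>w' $ k\<bar>" by simp
      also have "\<dots> \<le> (\<Sum>k<l. \<bar>w' $ k\<bar>)"
        using \<open>k < l\<close> by (intro member_le_sum) auto
      finally show ?thesis .
    qed
    ultimately have "\<mu> w' < \<mu> w" unfolding \<mu>_def using p1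
      by (simp add: nat_less_eq_zless)
    then show False using w(2)[OF Pw'] by simp
  qed
  then obtain k0 where k0: "k0 < l" "\<not> p dvd w $ k0" by blast
  define x where "x k = (if k < l then w $ k mod p else 0)" for k
  have "x \<in> hyp_p l p a (s t)" if "t < l" for t
  proof -
    have "(\<Sum>k<l. a (s t) k * x k) mod p = (\<Sum>k<l. a (s t) k * (w $ k mod p)) mod p"
      unfolding x_def by simp
    also have "\<dots> = (\<Sum>k<l. a (s t) k * w $ k) mod p" by (rule mod_sum_mult)
    also have "\<dots> = 0" using Mat_mult_vec[OF wc(1) that, of a s] wc(3) that by simp
    finally show ?thesis unfolding hyp_p_def x_def using p1 by simp
  qed
  then have "x \<in> (\<Inter>t\<in>{..<l}. hyp_p l p a (s t))" by auto
  then have "x = (\<lambda>_. 0)" using I unfolding in_frakI_p_def by auto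
  then have "w $ k0 mod p = 0" using k0(1) unfolding x_def by (metis)
  then show False using k0(2) by (simp add: dvd_eq_mod_eq_0)
qed

lemma det_frakI_p:
  assumes to: "term_order l ord" and p: "prime p"
    and L: "lucky l ord (ideal_gen l (lin_form l a ` s ` {..<l})) p"
    and D: "det (Mat l a s) \<noteq> 0" and l0: "0 < l"
  shows "in_frakI_p l p a s"
proof (rule ccontr)
  assume nI: "\<not> in_frakI_p l p a s"
  define Gen where "Gen = lin_form l a ` s ` {..<l}"
  define I where "I = ideal_gen l Gen"
  define X where "X j = (Poly_Mapping.single j (1::nat) :: mono)" for j
  have p1: "p > 1" using p prime_gt_1_int by blast
  have Gen_z: "Gen \<subseteq> zpolys l" unfolding Gen_def using zpolys_lin_form by auto
  have I_z: "I \<subseteq> zpolys l" unfolding I_def by (rule ideal_gen_subset[OF Gen_z])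
  have finGen: "finite Gen" unfolding Gen_def by simp
  have Gen_form: "\<exists>t<l. h = lin_form l a (s t)" if "h \<in> Gen" for h
    using that unfolding Gen_def by auto
  have lookup0: "Poly_Mapping.lookup f 0 = 0" if fI0: "f \<in> I" for f
  proof -
    obtain c where f: "f = (\<Sum>h\<in>Gen. c h * h)" using fI0 unfolding I_def ideal_gen_def by blast
    show ?thesis unfolding f lookup_sum
      by (intro sum.neutral ballI) (metis Gen_form lookup_c_lin_0)
  qed
  have X_mon: "j < l \<Longrightarrow> X j \<in> mon_set l" for j unfolding X_def mon_set_def by simp
  have "(\<lambda>_. 0) \<in> (\<Inter>t\<in>{..<l}. hyp_p l p a (s t))" unfolding hyp_p_def using p1 by auto
  then obtain v where v: "v \<in> (\<Inter>t\<in>{..<l}. hyp_p l p a (s t))" "v \<noteq> (\<lambda>_. 0)"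
    using nI unfolding in_frakI_p_def by blast
  have vh: "\<And>t. t < l \<Longrightarrow> v \<in> hyp_p l p a (s t)" using v(1) by auto
  have vl: "\<forall>k\<ge>l. v k = 0" and vb: "\<forall>k<l. 0 \<le> v k \<and> v k < p"
    using vh[OF l0] unfolding hyp_p_def by auto
  obtain j0 where j0: "j0 < l" "v j0 \<noteq> 0"
    using v(2) vl by (metis ext not_le)
  define S where "S = {j. j < l \<and> v j \<noteq> 0}"
  define R where "R = {(j,k). j < l \<and> k < l \<and> ord (X j) (X k) \<and> j \<noteq> k}"
  have transR: "trans R"
  proof (rule transI)
    fix x y z assume xy: "(x, y) \<in> R" and yz: "(y, z) \<in> R"
    then have m: "X x \<in> mon_set l" "X y \<in> mon_set l" "X z \<in> mon_set l" unfolding R_def using X_mon by auto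
    have o: "ord (X x) (X y)" "ord (X y) (X z)" "x \<noteq> y" using xy yz unfolding R_def by auto
    have "ord (X x) (X z)" using to_trans[OF to m(1,2,3) o(1,2)] .
    moreover have "x \<noteq> z"
    proof
      assume "x = z"
      then have "X x = X y" using to_antisym[OF to m(1,2) o(1)] o(2) by simp
      then show False using o(3) unfolding X_def by (metis single1_eq_iff)
    qed
    ultimately show "(x, z) \<in> R" using xy yz unfolding R_def by auto
  qed
  have "finite R" unfolding R_def by (rule finite_subset[of _ "{..<l} \<times> {..<l}"]) auto
  moreover have "acyclic R" unfolding acyclic_def trancl_id[OF transR] by (auto simp: R_def)
  ultimately have wfR: "wf R" by (rule finite_acyclic_wf)
  obtain k where k: "k \<in> S" and kmin: "\<And>j. (j, k) \<in> R \<Longrightarrow> j \<notin> S"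
    using wfE_min[OF wfR, of j0 S] j0 unfolding S_def by auto
  have kl: "k < l" and vk: "v k \<noteq> 0" using k unfolding S_def by auto
  define M where "M = Mat l a s"
  define d where "d = det M"
  define adj where "adj = adj_mat M"
  have Mc: "M \<in> carrier_mat l l" unfolding M_def by (rule Mat_carrier)
  have adjc: "adj \<in> carrier_mat l l" unfolding adj_def using adj_mat(1)[OF Mc] .
  have adjI: "(\<Sum>t<l. adj $$ (k,t) * a (s t) j) = (if k = j then d else 0)" if j: "j < l" for j
  proof -
    have "(adj * M) $$ (k,j) = (d \<cdot>\<^sub>m 1\<^sub>m l) $$ (k,j)"
      using adj_mat(3)[OF Mc] unfolding adj_def d_def by simp
    moreover have "(adj * M) $$ (k,j) = (\<Sum>t<l. adj $$ (k,t) * a (s t) j)"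
      using adjc Mc kl j by (simp add: scalar_prod_def atLeast0LessThan M_def Mat_def)
    ultimately show ?thesis using kl j by simp
  qed
  define f where "f = (\<Sum>t<l. of_int (adj $$ (k,t)) * lin_form l a (s t) :: zpoly)"
  have "f = (\<Sum>t<l. \<Sum>j<l. of_int (adj $$ (k,t) * a (s t) j) * var j)"
    unfolding f_def lin_form_alt by (simp add: sum_distrib_left mult.assoc)
  also have "\<dots> = (\<Sum>j<l. \<Sum>t<l. of_int (adj $$ (k,t) * a (s t) j) * var j)"
    by (rule sum.swap)
  also have "\<dots> = (\<Sum>j<l. of_int (\<Sum>t<l. adj $$ (k,t) * a (s t) j) * var j)"
    by (simp add: sum_distrib_right)
  also have "\<dots> = (\<Sum>j<l. if k = j then of_int d * var j else 0)"
    by (intro sum.cong refl) (simp add: adjI)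
  also have "\<dots> = of_int d * var k" using kl by simp
  also have "\<dots> = Poly_Mapping.single (X k) d"
    unfolding single0_of_int[symmetric] var_def X_def mult_single by simp
  finally have f_eq: "f = Poly_Mapping.single (X k) d" .
  have fI: "f \<in> I"
  proof -
    define c where "c h = (of_int (\<Sum>t\<in>{t\<in>{..<l}. lin_form l a (s t) = h}. adj $$ (k,t)) :: zpoly)" for h
    have "(\<Sum>h\<in>Gen. c h * h) = (\<Sum>h\<in>Gen. \<Sum>t\<in>{t\<in>{..<l}. lin_form l a (s t) = h}. of_int (adj $$ (k,t)) * lin_form l a (s t))"
      unfolding c_def of_int_sum sum_distrib_right by (intro sum.cong refl) auto
    also have "\<dots> = f"
      unfolding f_def Gen_def image_image
      by (rule sum.image_gen[symmetric]) simp
    finally have "f = (\<Sum>h\<in>Gen. c h * h)" ..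
    moreover have "\<forall>h\<in>Gen. c h \<in> zpolys l" unfolding c_def using zpolys_of_int by blast
    ultimately show ?thesis unfolding I_def ideal_gen_def by blast
  qed
  have dnz: "d \<noteq> 0" using D unfolding d_def M_def .
  have keysf: "Poly_Mapping.keys f = {X k}" using f_eq dnz by simp
  have fnz: "f \<noteq> 0" using keysf by auto
  have LTf: "LT ord f = X k" using LT_props(1)[OF to _ fnz] I_z fI keysf by auto
  have LMf: "LM ord f = f" unfolding LM_def LC_def LTf using f_eq by simp
  obtain G where G: "min_strong_GB l ord I G" "\<forall>g\<in>G. \<not> p dvd LC ord g"
    using L unfolding lucky_def I_def Gen_def by blast
  obtain g where g: "g \<in> G" "pdvd l (LM ord g) (LM ord f)"
    using G(1) fI fnz unfolding min_strong_GB_def by blast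
  have gI: "g \<in> I" and gnz: "g \<noteq> 0" using G(1) g(1) unfolding min_strong_GB_def by auto
  have gz: "g \<in> zpolys l" using gI I_z by auto
  obtain q where q: "f = q * Poly_Mapping.single (LT ord g) (LC ord g)"
  proof -
    have "pdvd l (LM ord g) f" using g(2) LMf by simp
    then show ?thesis using that unfolding pdvd_def LM_def by blast
  qed
  have "X k \<in> Poly_Mapping.keys (q * Poly_Mapping.single (LT ord g) (LC ord g))"
    using keysf q by auto
  then obtain a' b' where ab: "X k = a' + b'" "b' \<in> Poly_Mapping.keys (Poly_Mapping.single (LT ord g) (LC ord g))"
    using keys_mult by blast
  have "b' = LT ord g" using ab(2) by (simp split: if_splits)
  then have "LT ord g = 0 \<or> LT ord g = X k" using add_eq_single1[of a' b' k] ab(1) unfolding X_def by metis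
  moreover have "LT ord g \<noteq> 0"
    using LT_props(1)[OF to gz gnz] lookup0[OF gI] by (metis in_keys_iff)
  ultimately have LTg: "LT ord g = X k" by blast
  have LCg: "LC ord g = Poly_Mapping.lookup g (X k)" unfolding LC_def LTg ..
  have gmax: "\<forall>m\<in>Poly_Mapping.keys g. ord m (X k)" using LT_props(2)[OF to gz gnz] LTg by simp
  obtain c' where c': "g = (\<Sum>h\<in>Gen. c' h * h)" using gI unfolding I_def ideal_gen_def by blast
  have "(\<Sum>j<l. Poly_Mapping.lookup g (X j) * v j) = (\<Sum>h\<in>Gen. \<Sum>j<l. Poly_Mapping.lookup (c' h * h) (X j) * v j)"
    unfolding c' lookup_sum sum_distrib_right by (rule sum.swap)
  moreover have "p dvd (\<Sum>j<l. Poly_Mapping.lookup (c' h * h) (X j) * v j)" if hG: "h \<in> Gen" for h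
  proof -
    obtain t where t: "t < l" "h = lin_form l a (s t)" using Gen_form[OF hG] by blast
    have "(\<Sum>j<l. Poly_Mapping.lookup (c' h * h) (X j) * v j) = Poly_Mapping.lookup (c' h) 0 * (\<Sum>j<l. a (s t) j * v j)"
      unfolding sum_distrib_left
    proof (intro sum.cong refl)
      fix j assume "j \<in> {..<l}"
      then have "Poly_Mapping.lookup (c' h * h) (X j) = Poly_Mapping.lookup (c' h) 0 * a (s t) j"
        unfolding X_def t(2) by (intro lookup_c_lin_1) simp
      then show "Poly_Mapping.lookup (c' h * h) (X j) * v j = Poly_Mapping.lookup (c' h) 0 * (a (s t) j * v j)"
        by simp
    qed
    moreover have "p dvd (\<Sum>j<l. a (s t) j * v j)" using vh[OF t(1)] unfolding hyp_p_def by (simp add: dvd_eq_mod_eq_0)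
    ultimately show ?thesis by simp
  qed
  ultimately have pdv: "p dvd (\<Sum>j<l. Poly_Mapping.lookup g (X j) * v j)" by (simp add: dvd_sum)
  have "(\<Sum>j<l. Poly_Mapping.lookup g (X j) * v j) = Poly_Mapping.lookup g (X k) * v k + (\<Sum>j\<in>{..<l} - {k}. Poly_Mapping.lookup g (X j) * v j)"
    using kl by (simp add: sum.remove)
  also have "(\<Sum>j\<in>{..<l} - {k}. Poly_Mapping.lookup g (X j) * v j) = 0"
  proof (intro sum.neutral ballI)
    fix j assume j: "j \<in> {..<l} - {k}"
    show "Poly_Mapping.lookup g (X j) * v j = 0"
    proof (cases "Poly_Mapping.lookup g (X j) = 0")
      case False
      then have "ord (X j) (X k)" using gmax by (simp add: in_keys_iff)
      then have "(j, k) \<in> R" using j kl unfolding R_def by auto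
      then have "v j = 0" using kmin j unfolding S_def by auto
      then show ?thesis by simp
    qed simp
  qed
  finally have "p dvd LC ord g * v k" using pdv LCg by simp
  then have "p dvd LC ord g \<or> p dvd v k" using p by (simp add: prime_dvd_mult_iff)
  moreover have "\<not> p dvd LC ord g" using G(2) g(1) by blast
  moreover have "\<not> p dvd v k"
  proof
    assume "p dvd v k"
    moreover have "0 < v k" using vb kl vk by fastforce
    ultimately have "p \<le> v k" by (simp add: zdvd_imp_le)
    then show False using vb kl by auto
  qed
  ultimately show False by blast
qed


theorem proposition4p11:
  fixes l n :: nat and a :: "nat \<Rightarrow> nat \<Rightarrow> int" and s :: "nat \<Rightarrow> nat"
    and ord :: "mono \<Rightarrow> mono \<Rightarrow> bool" and p :: int
  assumes "arrangement l n a"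
    and "\<forall>t t'. t < t' \<and> t' < l \<longrightarrow> s t < s t'"
    and "\<forall>t<l. s t < n"
    and "term_order l ord"
    and "good_prime l n a p"
    and "lucky l ord (ideal_gen l (lin_form l a ` s ` {..<l})) p"
  shows "in_frakI l a s \<longleftrightarrow> in_frakI_p l p a s"
proof (cases "l = 0")
  case True
  have a1: "(UNIV :: (nat \<Rightarrow> rat) set) \<noteq> {\<lambda>_. 0}"
  proof
    assume "(UNIV :: (nat \<Rightarrow> rat) set) = {\<lambda>_. 0}"
    then have "(\<lambda>_::nat. 1::rat) \<in> {\<lambda>_. 0}" by (metis UNIV_I)
    then show False by (simp add: fun_eq_iff)
  qed
  have a2: "(UNIV :: (nat \<Rightarrow> int) set) \<noteq> {\<lambda>_. 0}"
  proof
    assume "(UNIV :: (nat \<Rightarrow> int) set) = {\<lambda>_. 0}"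
    then have "(\<lambda>_::nat. 1::int) \<in> {\<lambda>_. 0}" by (metis UNIV_I)
    then show False by (simp add: fun_eq_iff)
  qed
  show ?thesis unfolding in_frakI_def in_frakI_p_def using True a1 a2 by simp
next
  case False
  then have l0: "0 < l" by simp
  have p: "prime p" using assms(5) unfolding good_prime_def by blast
  show ?thesis
  proof
    assume "in_frakI l a s"
    then have "det (Mat l a s) \<noteq> 0" using frakI_iff_det[OF l0] by blast
    then show "in_frakI_p l p a s" using det_frakI_p[OF assms(4) p assms(6) _ l0] by blast
  next
    assume "in_frakI_p l p a s"
    then have "det (Mat l a s) \<noteq> 0" using frakI_p_det[OF p] by blast
    then show "in_frakI l a s" using frakI_iff_det[OF l0] by blast
  qed
qed

end
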